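(* For $n\ge1$, the sum of the semi-perimeters of all members of $I_n$ is $\frac{1}{12}(n^2+15n+8)\,n!$.
   Context: An inversion sequence of length $n$ is a sequence $\rho=\rho_1\cdots\rho_n$ of integers with $1\le \rho_i\le i$ for all $i$; $I_n$ is the set of these. Represent $\rho$ as a bargraph whose $i$-th column has $\rho_i$ unit cells standing on the $x$-axis. The semi-perimeter of $\rho$ is half the perimeter of this bargraph (bottom boundary included), i.e. $n+\rho_1+\sum_{i=1}^{n-1}\max(\rho_{i+1}-\rho_i,0)$. *)

theory Defs
  imports Complex_Main
begin

text \<open>Inversion sequences of length n, represented as lists (0-indexed):
  the entry at position i (0-based) corresponds to rho_(i+1) and must satisfy 1 <= rho_(i+1) <= i+1.\<close>
definition inv_seqs :: "nat \<Rightarrow> nat list set" where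
  "inv_seqs n = {rho. length rho = n \<and> (\<forall>i<n. 1 \<le> rho ! i \<and> rho ! i \<le> i + 1)}"

definition semi_perimeter :: "nat list \<Rightarrow> int" where
  "semi_perimeter rho = int (length rho) + int (rho ! 0)
     + (\<Sum>i = 1..length rho - 1. max (int (rho ! i) - int (rho ! (i - 1))) 0)"

end

theory Submission
  imports Defs
begin

lemma inv_seqs_Suc:
  "inv_seqs (Suc n) = (\<lambda>(r,x). r @ [x]) ` (inv_seqs n \<times> {1..Suc n})"
proof
  show "inv_seqs (Suc n) \<subseteq> (\<lambda>(r,x). r @ [x]) ` (inv_seqs n \<times> {1..Suc n})"
  proof
    fix rho assume h: "rho \<in> inv_seqs (Suc n)"
    then have len: "length rho = Suc n" by (simp add: inv_seqs_def)
    then have eq: "rho = butlast rho @ [last rho]"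
      by (metis append_butlast_last_id list.size(3) nat.distinct(1))
    have lb: "last rho = rho ! n" using len by (subst last_conv_nth) auto
    have "butlast rho \<in> inv_seqs n"
      using h len by (auto simp: inv_seqs_def nth_butlast)
    moreover have "last rho \<in> {1..Suc n}" using h lb by (auto simp: inv_seqs_def)
    ultimately show "rho \<in> (\<lambda>(r,x). r @ [x]) ` (inv_seqs n \<times> {1..Suc n})"
      using eq by (auto intro!: image_eqI[where x="(butlast rho, last rho)"])
  qed
next
  show "(\<lambda>(r,x). r @ [x]) ` (inv_seqs n \<times> {1..Suc n}) \<subseteq> inv_seqs (Suc n)"
    by (auto simp: inv_seqs_def nth_append less_Suc_eq)
qed

lemma inj_snoc: "inj_on (\<lambda>(r,x). r @ [x]) (A \<times> B)"
  by (auto simp: inj_on_def)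

lemma finite_inv_seqs: "finite (inv_seqs n)"
  by (induction n) (simp_all add: inv_seqs_Suc, simp add: inv_seqs_def finite_lists_length_eq)

lemma sum_inv_seqs_Suc:
  "(\<Sum>rho\<in>inv_seqs (Suc n). f rho) = (\<Sum>r\<in>inv_seqs n. \<Sum>x=1..Suc n. f (r @ [x]))"
proof -
  have "(\<Sum>rho\<in>inv_seqs (Suc n). f rho) = (\<Sum>p\<in>inv_seqs n \<times> {1..Suc n}. f ((\<lambda>(r,x). r @ [x]) p))"
    unfolding inv_seqs_Suc by (rule sum.reindex[OF inj_snoc, unfolded comp_def])
  also have "\<dots> = (\<Sum>r\<in>inv_seqs n. \<Sum>x=1..Suc n. f (r @ [x]))"
    by (subst sum.cartesian_product) (simp add: split_def)
  finally show ?thesis .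
qed

lemma card_inv_seqs: "card (inv_seqs n) = fact n"
proof (induction n)
  case 0
  have "inv_seqs 0 = {[]}" by (auto simp: inv_seqs_def)
  then show ?case by simp
next
  case (Suc n)
  have "card (inv_seqs (Suc n)) = (\<Sum>rho\<in>inv_seqs (Suc n). 1)" by simp
  also have "\<dots> = (\<Sum>r\<in>inv_seqs n. \<Sum>x=1..Suc n. (1::nat))" by (rule sum_inv_seqs_Suc)
  also have "\<dots> = fact n * Suc n" using Suc by simp
  finally show ?case by (simp add: algebra_simps)
qed

lemma sp_snoc:
  assumes "r \<in> inv_seqs (Suc m)"
  shows "semi_perimeter (r @ [x]) = semi_perimeter r + 1 + max (int x - int (r ! m)) 0"
proof -
  have len: "length r = Suc m" using assms by (simp add: inv_seqs_def)
  have "(\<Sum>i = 1..Suc m. max (int ((r@[x]) ! i) - int ((r@[x]) ! (i - 1))) 0)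
      = (\<Sum>i = 1..m. max (int ((r@[x]) ! i) - int ((r@[x]) ! (i - 1))) 0)
        + max (int x - int (r ! m)) 0"
    using len by (simp add: nth_append)
  also have "(\<Sum>i = 1..m. max (int ((r@[x]) ! i) - int ((r@[x]) ! (i - 1))) 0)
      = (\<Sum>i = 1..m. max (int (r ! i) - int (r ! (i - 1))) 0)"
    using len by (intro sum.cong) (auto simp: nth_append)
  finally show ?thesis using len unfolding semi_perimeter_def by (simp add: nth_append)
qed

lemma sum_last:
  "(\<Sum>r\<in>inv_seqs (Suc m). g (r ! m)) = fact m * (\<Sum>a=1..Suc m. g a)"
proof -
  have "(\<Sum>r\<in>inv_seqs (Suc m). g (r ! m)) = (\<Sum>r\<in>inv_seqs m. \<Sum>x=1..Suc m. g ((r@[x]) ! m))"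
    by (rule sum_inv_seqs_Suc)
  also have "\<dots> = (\<Sum>r\<in>inv_seqs m. \<Sum>x=1..Suc m. g x)"
    by (intro sum.cong refl) (auto simp: inv_seqs_def nth_append)
  also have "\<dots> = of_nat (card (inv_seqs m)) * (\<Sum>a=1..Suc m. g a)" by simp
  finally show ?thesis by (simp add: card_inv_seqs)
qed

lemma inner_sum:
  "2 * (\<Sum>x=1..k. max (int x - int a) 0) = (if a \<le> k then (int k - a) * (int k - a + 1) else 0)"
proof (induction k)
  case 0 then show ?case by simp
next
  case (Suc k)
  have "(\<Sum>x=1..Suc k. max (int x - int a) 0) = (\<Sum>x=1..k. max (int x - int a) 0) + max (int (Suc k) - int a) 0"
    by simp
  then show ?case using Suc
    by (cases "a \<le> k"; cases "a = Suc k") (auto simp: algebra_simps)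
qed

lemma outer_sum:
  "3 * (\<Sum>a=1..n. (m - int a) * (m - int a + 1)) = (m - 1) * m * (m + 1) - (m - n - 1) * (m - n) * (m - n + 1)"
  by (induction n) (auto simp: algebra_simps)

lemma T_sum:
  "6 * (\<Sum>a=1..n. \<Sum>x=1..Suc n. max (int x - int a) 0) = int n * (n+1) * (n+2)"
proof -
  have "(\<Sum>a=1..n. 2 * (\<Sum>x=1..Suc n. max (int x - int a) 0)) = (\<Sum>a=1..n. (int (Suc n) - a) * (int (Suc n) - a + 1))"
    by (intro sum.cong refl) (simp only: inner_sum, auto)
  then have "2 * (\<Sum>a=1..n. (\<Sum>x=1..Suc n. max (int x - int a) 0)) = (\<Sum>a=1..n. (int (Suc n) - a) * (int (Suc n) - a + 1))"
    by (simp add: sum_distrib_left)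
  moreover have "3 * (\<Sum>a=1..n. (int (Suc n) - a) * (int (Suc n) - a + 1)) = int n * (n+1) * (n+2)"
    by (subst outer_sum) (simp add: algebra_simps)
  ultimately show ?thesis by linarith
qed

lemma main_int:
  "12 * (\<Sum>rho\<in>inv_seqs (Suc m). semi_perimeter rho) = (int (Suc m) ^ 2 + 15 * int (Suc m) + 8) * fact (Suc m)"
proof (induction m)
  case 0
  have "inv_seqs 1 = {[1]}"
    by (auto simp: inv_seqs_def) (metis One_nat_def le_antisym length_0_conv length_Suc_conv nth_Cons_0)
  then show ?case by (simp add: semi_perimeter_def)
next
  case (Suc m)
  let ?S = "\<lambda>m. (\<Sum>rho\<in>inv_seqs (Suc m). semi_perimeter rho)"
  let ?g = "\<lambda>a. (\<Sum>x=1..Suc (Suc m). max (int x - int a) 0)"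
  have "?S (Suc m) = (\<Sum>r\<in>inv_seqs (Suc m). \<Sum>x=1..Suc (Suc m). semi_perimeter (r @ [x]))"
    by (rule sum_inv_seqs_Suc)
  also have "\<dots> = (\<Sum>r\<in>inv_seqs (Suc m). \<Sum>x=1..Suc (Suc m). semi_perimeter r + 1 + max (int x - int (r ! m)) 0)"
    by (intro sum.cong refl) (simp add: sp_snoc)
  also have "\<dots> = (\<Sum>r\<in>inv_seqs (Suc m). int (Suc (Suc m)) * (semi_perimeter r + 1) + ?g (r ! m))"
    by (simp add: sum.distrib)
  also have "\<dots> = int (Suc (Suc m)) * (?S m + int (card (inv_seqs (Suc m)))) + (\<Sum>r\<in>inv_seqs (Suc m). ?g (r ! m))"
    by (simp add: sum.distrib sum_distrib_left[symmetric] sum_distrib_right[symmetric] distrib_left algebra_simps)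
  also have "(\<Sum>r\<in>inv_seqs (Suc m). ?g (r ! m)) = fact m * (\<Sum>a=1..Suc m. ?g a)"
    by (rule sum_last)
  finally have eq: "?S (Suc m) = int (Suc (Suc m)) * (?S m + fact (Suc m)) + fact m * (\<Sum>a=1..Suc m. ?g a)"
    by (simp only: card_inv_seqs of_nat_fact)
  have T: "6 * (\<Sum>a=1..Suc m. ?g a) = int (Suc m) * (Suc m + 1) * (Suc m + 2)"
    by (rule T_sum)
  have f1: "(fact (Suc m) :: int) = int (Suc m) * fact m" by simp
  have f2: "(fact (Suc (Suc m)) :: int) = int (Suc (Suc m)) * fact (Suc m)" by simp
  define S where "S = ?S m"
  define G where "G = (\<Sum>a=1..Suc m. ?g a)"
  define F where "F = (fact m :: int)"
  define M where "M = int m"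
  have IH: "12 * S = ((M+1)^2 + 15*(M+1) + 8) * ((M+1) * F)"
    using Suc.IH unfolding S_def F_def M_def f1 by (simp add: add.commute)
  have T': "6 * G = (M+1)*(M+2)*(M+3)" using T[folded G_def] unfolding M_def by (simp add: algebra_simps)
  have eq': "?S (Suc m) = (M+2) * (S + (M+1)*F) + F * G"
    using eq unfolding S_def G_def F_def M_def f1 by (simp add: algebra_simps)
  have "12 * ?S (Suc m) = (M+2) * (12 * S) + 12*(M+2)*(M+1)*F + 2 * F * (6 * G)"
    unfolding eq' by (simp add: algebra_simps)
  also have "\<dots> = ((M+2)^2 + 15*(M+2) + 8) * ((M+2) * ((M+1) * F))"
    unfolding IH T' by (simp add: algebra_simps power2_eq_square)
  finally show ?case unfolding f2 f1 F_def M_def by (simp add: add.commute)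
qed

theorem corollary2p4:
  fixes n :: nat
  assumes "n \<ge> 1"
  shows "real_of_int (\<Sum>rho\<in>inv_seqs n. semi_perimeter rho)
         = (1 / 12) * (real n ^ 2 + 15 * real n + 8) * real (fact n)"
proof -
  obtain m where n: "n = Suc m" using assms by (cases n) auto
  have "real_of_int (12 * (\<Sum>rho\<in>inv_seqs n. semi_perimeter rho))
      = real_of_int ((int n ^ 2 + 15 * int n + 8) * fact n)"
    using main_int[of m] n by simp
  then show ?thesis by (simp add: of_int_fact)
qed

end
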